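(* Let $w=w_1\cdots w_N$ be a 132-avoiding sorting network of $\mathfrak S_n$ and let $1\le i<j\le n$. Then the (unique) step $k$ at which the values $i$ and $j$ are interchanged, i.e. at which $\sigma_k$ is obtained from $\sigma_{k-1}$ by swapping the adjacent entries $i$ and $j$, satisfies $w_k=j-i$.
   Context: $N=\binom n2$, $s_i=(i,i+1)$, $w_0$ the reverse permutation $w_0(i)=n+1-i$. A sorting network is a word $w_1\cdots w_N$ over $[n-1]$ with $s_{w_1}\cdots s_{w_N}=w_0$; intermediate permutations $\sigma_0=\mathrm{id}$, $\sigma_k=s_{w_1}\cdots s_{w_k}$, where in one-line notation $\sigma_k$ is obtained from $\sigma_{k-1}$ by swapping the entries in positions $w_k$ and $w_k+1$. It is 132-avoiding if every $\sigma_k$ avoids the pattern 132. In a sorting network each pair of values is swapped exactly once. *)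

theory Defs
  imports Main
begin

definition adj_swap :: "nat \<Rightarrow> nat \<Rightarrow> nat" where
  "adj_swap p x = (if x = p then p + 1 else if x = p + 1 then p else x)"

text \<open>Intermediate permutations in one-line notation: sigma w k maps a position to
  the value in that position. The word w = w_1 ... w_N is the list w, with w_k = w ! (k-1).
  sigma_k = sigma_(k-1) s_(w_k), i.e. swap the entries in positions w_k and w_k + 1.\<close>
fun sigma :: "nat list \<Rightarrow> nat \<Rightarrow> (nat \<Rightarrow> nat)" where
  "sigma w 0 = id"
| "sigma w (Suc k) = sigma w k \<circ> adj_swap (w ! k)"

definition sorting_network :: "nat \<Rightarrow> nat list \<Rightarrow> bool" where
  "sorting_network n w \<longleftrightarrow>
     length w = n choose 2 \<and> (\<forall>a \<in> set w. 1 \<le> a \<and> a \<le> n - 1) \<and>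
     (\<forall>x \<in> {1..n}. sigma w (length w) x = n + 1 - x)"

definition avoids_132 :: "nat \<Rightarrow> (nat \<Rightarrow> nat) \<Rightarrow> bool" where
  "avoids_132 n s \<longleftrightarrow>
     \<not> (\<exists>a b c. 1 \<le> a \<and> a < b \<and> b < c \<and> c \<le> n \<and> s a < s c \<and> s c < s b)"

definition avoiding_132_network :: "nat \<Rightarrow> nat list \<Rightarrow> bool" where
  "avoiding_132_network n w \<longleftrightarrow>
     sorting_network n w \<and> (\<forall>k \<le> length w. avoids_132 n (sigma w k))"

end

theory Submission
  imports Defs
begin

lemma adj_swap_inv[simp]: "adj_swap p (adj_swap p x) = x"
  by (simp add: adj_swap_def)

lemma adj_swap_lt: "a < b \<Longrightarrow> (a,b) \<noteq> (p, p+1) \<Longrightarrow> adj_swap p a < adj_swap p b"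
  by (auto simp: adj_swap_def)

lemma adj_swap_range: "1 \<le> p \<Longrightarrow> p+1 \<le> n \<Longrightarrow> x \<in> {1..n} \<Longrightarrow> adj_swap p x \<in> {1..(n::nat)}"
  by (auto simp: adj_swap_def)

lemma card_pairs: "card {(a,b). 1 \<le> a \<and> a < b \<and> b \<le> (n::nat)} = n choose 2"
proof (induction n)
  case 0
  have E: "{(a,b). 1 \<le> a \<and> a < b \<and> b \<le> (0::nat)} = {}" by auto
  show ?case unfolding E by simp
next
  case (Suc n)
  have e: "{(a,b). 1 \<le> a \<and> a < b \<and> b \<le> Suc n} =
     {(a,b). 1 \<le> a \<and> a < b \<and> b \<le> n} \<union> ((\<lambda>a. (a, Suc n)) ` {1..n})"
    by auto
  have f: "finite {(a,b). 1 \<le> a \<and> a < b \<and> b \<le> (n::nat)}"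
    by (rule finite_subset[of _ "{1..n} \<times> {1..n}"]) auto
  have d: "{(a,b). 1 \<le> a \<and> a < b \<and> b \<le> n} \<inter> ((\<lambda>a. (a, Suc n)) ` {1..n}) = {}"
    by auto
  have c: "card ((\<lambda>a. (a, Suc n)) ` {1..n}) = n"
    by (subst card_image) (auto simp: inj_on_def)
  have "card {(a,b). 1 \<le> a \<and> a < b \<and> b \<le> Suc n} = (n choose 2) + n"
    unfolding e using f d c Suc by (simp add: card_Un_disjoint)
  also have "\<dots> = Suc n choose 2"
    by (simp add: numeral_2_eq_2)
  finally show ?case .
qed

locale net =
  fixes n :: nat and w :: "nat list"
  assumes net: "avoiding_132_network n w"
begin

lemma len: "length w = n choose 2"
  using net by (simp add: avoiding_132_network_def sorting_network_def)

lemma final: "x \<in> {1..n} \<Longrightarrow> sigma w (length w) x = n + 1 - x"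
  using net unfolding avoiding_132_network_def sorting_network_def by blast

lemma avoid: "k \<le> length w \<Longrightarrow> avoids_132 n (sigma w k)"
  using net by (simp add: avoiding_132_network_def)

lemma letter: "m < length w \<Longrightarrow> 1 \<le> w!m \<and> w!m + 1 \<le> n"
  using net nth_mem[of m w] unfolding avoiding_132_network_def sorting_network_def
  by fastforce

lemma sig_Suc: "sigma w (Suc m) x = sigma w m (adj_swap (w!m) x)"
  by simp

lemma bij: "m \<le> length w \<Longrightarrow> bij_betw (sigma w m) {1..n} {1..n}"
proof (induction m)
  case 0
  then show ?case by (simp add: bij_betw_id id_def[symmetric])
next
  case (Suc m)
  have l: "1 \<le> w!m" "w!m + 1 \<le> n" using letter Suc by auto
  have b: "bij_betw (adj_swap (w!m)) {1..n} {1..n}"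
    by (rule bij_betw_byWitness[where f'="adj_swap (w!m)"]) (use adj_swap_range l in auto)
  have "bij_betw (sigma w m \<circ> adj_swap (w!m)) {1..n} {1..n}"
    using bij_betw_trans[OF b Suc.IH] Suc.prems by simp
  then show ?case by (simp add: comp_def)
qed

lemma inj: "m \<le> length w \<Longrightarrow> inj_on (sigma w m) {1..n}"
  using bij bij_betw_def by blast

lemma surj: "m \<le> length w \<Longrightarrow> y \<in> {1..n} \<Longrightarrow> \<exists>a\<in>{1..n}. sigma w m a = y"
  using bij unfolding bij_betw_def by (metis imageE)

lemma range: "m \<le> length w \<Longrightarrow> a \<in> {1..n} \<Longrightarrow> sigma w m a \<in> {1..n}"
  using bij unfolding bij_betw_def by blast

definition invs :: "nat \<Rightarrow> (nat \<times> nat) set" where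
  "invs m = {(a,b). 1 \<le> a \<and> a < b \<and> b \<le> n \<and> sigma w m b < sigma w m a}"

lemma invs_fin: "finite (invs m)"
  by (rule finite_subset[of _ "{1..n} \<times> {1..n}"]) (auto simp: invs_def)

lemma invs_step_le:
  assumes m: "m < length w"
  shows "card (invs (Suc m)) \<le> Suc (card (invs m))"
proof -
  define q where "q = w!m"
  define f where "f = (\<lambda>(a,b). (adj_swap q a, adj_swap q b))"
  have l: "1 \<le> q" "q + 1 \<le> n" using letter m q_def by auto
  have "invs (Suc m) \<subseteq> insert (q,q+1) (f ` invs m)"
  proof
    fix x assume x: "x \<in> invs (Suc m)"
    obtain a b where ab: "x = (a,b)" by force
    show "x \<in> insert (q,q+1) (f ` invs m)"
    proof (cases "(a,b) = (q,q+1)")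
      case True then show ?thesis using ab by simp
    next
      case False
      have lt: "adj_swap q a < adj_swap q b" using adj_swap_lt False x ab by (auto simp: invs_def)
      have r: "adj_swap q a \<in> {1..n}" "adj_swap q b \<in> {1..n}"
        using adj_swap_range[OF l] x ab by (auto simp: invs_def)
      have "(adj_swap q a, adj_swap q b) \<in> invs m"
        using lt r x ab by (auto simp: invs_def q_def)
      moreover have "f (adj_swap q a, adj_swap q b) = x" using ab f_def by simp
      ultimately show ?thesis by force
    qed
  qed
  hence "card (invs (Suc m)) \<le> card (insert (q,q+1) (f ` invs m))"
    by (intro card_mono) (auto simp: invs_fin)
  also have "\<dots> \<le> Suc (card (f ` invs m))"
    by (simp add: card_insert_if invs_fin)
  also have "\<dots> \<le> Suc (card (invs m))"
    using card_image_le invs_fin by auto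
  finally show ?thesis .
qed

lemma invs_step_desc:
  assumes m: "m < length w" and d: "sigma w m (w!m + 1) < sigma w m (w!m)"
  shows "Suc (card (invs (Suc m))) \<le> card (invs m)"
proof -
  define q where "q = w!m"
  define f where "f = (\<lambda>(a,b). (adj_swap q a, adj_swap q b))"
  have l: "1 \<le> q" "q + 1 \<le> n" using letter m q_def by auto
  have qin: "(q,q+1) \<in> invs m" using l d q_def by (auto simp: invs_def)
  have "invs (Suc m) \<subseteq> f ` (invs m - {(q,q+1)})"
  proof
    fix x assume x: "x \<in> invs (Suc m)"
    obtain a b where ab: "x = (a,b)" by force
    have False_case: "(a,b) \<noteq> (q,q+1)"
    proof
      assume "(a,b) = (q,q+1)"
      then show False using x ab d q_def by (simp add: invs_def adj_swap_def)
    qed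
    have lt: "adj_swap q a < adj_swap q b" using adj_swap_lt False_case x ab by (auto simp: invs_def)
    have r: "adj_swap q a \<in> {1..n}" "adj_swap q b \<in> {1..n}"
      using adj_swap_range[OF l] x ab by (auto simp: invs_def)
    have "(adj_swap q a, adj_swap q b) \<in> invs m"
      using lt r x ab by (auto simp: invs_def q_def)
    moreover have "(adj_swap q a, adj_swap q b) \<noteq> (q, q+1)"
    proof
      assume "(adj_swap q a, adj_swap q b) = (q, q+1)"
      hence "a = q+1" "b = q" using adj_swap_inv[of q a] adj_swap_inv[of q b]
        by (auto simp: adj_swap_def)
      then show False using x ab by (auto simp: invs_def)
    qed
    moreover have "f (adj_swap q a, adj_swap q b) = x" using ab f_def by simp
    ultimately show "x \<in> f ` (invs m - {(q,q+1)})" by force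
  qed
  hence "card (invs (Suc m)) \<le> card (f ` (invs m - {(q,q+1)}))"
    by (intro card_mono) (auto simp: invs_fin)
  also have "\<dots> \<le> card (invs m - {(q,q+1)})"
    by (intro card_image_le) (simp add: invs_fin)
  also have "\<dots> = card (invs m) - 1"
    using qin invs_fin by simp
  finally show ?thesis using qin invs_fin
    by (metis Suc_diff_1 card_gt_0_iff empty_iff not_less_eq_eq le_trans nat_less_le)
qed

lemma card_le: "m \<le> length w \<Longrightarrow> card (invs m) \<le> m"
proof (induction m)
  case 0
  have "invs 0 = {}" by (auto simp: invs_def)
  then show ?case by simp
next
  case (Suc m)
  then show ?case using invs_step_le[of m] by simp
qed

lemma invs_final: "invs (length w) = {(a,b). 1 \<le> a \<and> a < b \<and> b \<le> n}"
  using final by (auto simp: invs_def)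

lemma ascent:
  assumes m: "m < length w"
  shows "sigma w m (w!m) < sigma w m (w!m + 1)"
proof (rule ccontr)
  assume "\<not> ?thesis"
  moreover have "sigma w m (w!m) \<noteq> sigma w m (w!m + 1)"
  proof
    assume eq: "sigma w m (w!m) = sigma w m (w!m + 1)"
    have l: "1 \<le> w!m" "w!m + 1 \<le> n" using letter[OF m] by auto
    have "w!m = w!m + 1"
      using inj_onD[OF inj[of m] eq] l m by simp
    then show False by simp
  qed
  ultimately have d: "sigma w m (w!m + 1) < sigma w m (w!m)" by simp
  have base: "card (invs (Suc m)) + 2 \<le> Suc m"
    using invs_step_desc[OF m d] card_le[of m] m by simp
  have "card (invs m') + 2 \<le> m'" if "Suc m \<le> m'" "m' \<le> length w" for m'
    using that
  proof (induction m' rule: dec_induct)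
    case base then show ?case using \<open>card (invs (Suc m)) + 2 \<le> Suc m\<close> by simp
  next
    case (step k)
    have "card (invs (Suc k)) \<le> Suc (card (invs k))" using invs_step_le[of k] step.prems by simp
    then show ?case using step.IH step.prems by simp
  qed
  hence c: "card (invs (length w)) + 2 \<le> length w" using m by simp
  have "card (invs (length w)) = n choose 2" by (simp only: invs_final card_pairs)
  hence "card (invs (length w)) = length w" using len by (simp only:)
  then show False using c by simp
qed

definition before :: "nat \<Rightarrow> nat \<Rightarrow> nat \<Rightarrow> bool" where
  "before m u v \<longleftrightarrow> (\<exists>a b. 1 \<le> a \<and> a < b \<and> b \<le> n \<and> sigma w m a = u \<and> sigma w m b = v)"

lemma excl: "m \<le> length w \<Longrightarrow> before m u v \<Longrightarrow> \<not> before m v u"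
proof
  assume m: "m \<le> length w" and "before m u v" "before m v u"
  then obtain a b a' b' where h: "1 \<le> a" "a < b" "b \<le> n" "sigma w m a = u" "sigma w m b = v"
    "1 \<le> a'" "a' < b'" "b' \<le> n" "sigma w m a' = v" "sigma w m b' = u"
    unfolding before_def by blast
  have "a = b'" using inj[OF m] h unfolding inj_on_def by (metis atLeastAtMost_iff le_trans less_imp_le)
  moreover have "b = a'" using inj[OF m] h unfolding inj_on_def by (metis atLeastAtMost_iff le_trans less_imp_le)
  ultimately show False using h by simp
qed

lemma total: "m \<le> length w \<Longrightarrow> u \<noteq> v \<Longrightarrow> u \<in> {1..n} \<Longrightarrow> v \<in> {1..n} \<Longrightarrow>
   before m u v \<or> before m v u"
proof -
  assume m: "m \<le> length w" and uv: "u \<noteq> v" "u \<in> {1..n}" "v \<in> {1..n}"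
  obtain a where a: "a \<in> {1..n}" "sigma w m a = u" using surj[OF m uv(2)] by blast
  obtain b where b: "b \<in> {1..n}" "sigma w m b = v" using surj[OF m uv(3)] by blast
  have "a \<noteq> b" using a b uv by auto
  show ?thesis
  proof (cases "a < b")
    case True
    then have "before m u v" unfolding before_def using a b
      by (intro exI[of _ a] exI[of _ b]) simp
    then show ?thesis by simp
  next
    case False
    then have "b < a" using \<open>a \<noteq> b\<close> by simp
    then have "before m v u" unfolding before_def using a b
      by (intro exI[of _ b] exI[of _ a]) simp
    then show ?thesis by simp
  qed
qed

lemma before0: "before 0 u v \<longleftrightarrow> (1 \<le> u \<and> u < v \<and> v \<le> n)"
  by (auto simp: before_def)

lemma mono_step:
  assumes m: "m < length w" and uv: "u < v" and b: "before m v u"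
  shows "before (Suc m) v u"
proof -
  define q where "q = w!m"
  have l: "1 \<le> q" "q + 1 \<le> n" using letter m q_def by auto
  obtain a b where h: "1 \<le> a" "a < b" "b \<le> n" "sigma w m a = v" "sigma w m b = u"
    using b unfolding before_def by blast
  have "(a,b) \<noteq> (q,q+1)" using ascent[OF m] h uv q_def by auto
  hence lt: "adj_swap q a < adj_swap q b" using adj_swap_lt h by auto
  have r: "adj_swap q a \<in> {1..n}" "adj_swap q b \<in> {1..n}"
    using adj_swap_range[OF l] h by auto
  show ?thesis unfolding before_def
    by (rule exI[of _ "adj_swap q a"], rule exI[of _ "adj_swap q b"]) (use lt r h q_def in auto)
qed

lemma mono: "m \<le> m' \<Longrightarrow> m' \<le> length w \<Longrightarrow> u < v \<Longrightarrow> before m v u \<Longrightarrow> before m' v u"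
proof (induction m' rule: dec_induct)
  case base then show ?case by simp
next
  case (step k) then show ?case using mono_step by simp
qed

lemma swap_time:
  assumes m: "m < length w" and b1: "before m u v" and b2: "before (Suc m) v u"
  shows "sigma w m (w!m) = u \<and> sigma w m (w!m + 1) = v"
proof -
  define q where "q = w!m"
  have l: "1 \<le> q" "q + 1 \<le> n" using letter m q_def by auto
  obtain a b where h: "1 \<le> a" "a < b" "b \<le> n" "sigma w m a = u" "sigma w m b = v"
    using b1 unfolding before_def by blast
  have "(a,b) = (q,q+1)"
  proof (rule ccontr)
    assume "(a,b) \<noteq> (q,q+1)"
    hence lt: "adj_swap q a < adj_swap q b" using adj_swap_lt h by auto
    have r: "adj_swap q a \<in> {1..n}" "adj_swap q b \<in> {1..n}"
      using adj_swap_range[OF l] h by auto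
    have "before (Suc m) u v" unfolding before_def
      by (rule exI[of _ "adj_swap q a"], rule exI[of _ "adj_swap q b"]) (use lt r h q_def in auto)
    then show False using excl[of "Suc m"] b2 m by simp
  qed
  then show ?thesis using h q_def by simp
qed

lemma lemA:
  assumes m: "m < length w" and a: "1 \<le> a" "a < w!m"
  shows "sigma w m (w!m) < sigma w m a"
proof (rule ccontr)
  define q where "q = w!m"
  have l: "1 \<le> q" "q + 1 \<le> n" using letter m q_def by auto
  assume nt: "\<not> ?thesis"
  have ne: "sigma w m a \<noteq> sigma w m q"
  proof
    assume eq: "sigma w m a = sigma w m q"
    have "a \<in> {1..n}" "q \<in> {1..n}" using a l q_def by auto
    then have "a = q" using inj_onD[OF inj[of m] eq] m by simp
    then show False using a q_def by simp
  qed
  have lt: "sigma w m a < sigma w m q" using nt ne q_def by simp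
  have asc: "sigma w m q < sigma w m (q+1)" using ascent[OF m] q_def by simp
  have av: "avoids_132 n (sigma w (Suc m))" by (rule avoid) (use m in simp)
  have e1: "sigma w (Suc m) a = sigma w m a"
    using a q_def by (simp add: adj_swap_def)
  have e2: "sigma w (Suc m) q = sigma w m (q+1)"
    using q_def by (simp add: adj_swap_def)
  have e3: "sigma w (Suc m) (q+1) = sigma w m q"
    using q_def by (simp add: adj_swap_def)
  have "\<exists>a' b c'. 1 \<le> a' \<and> a' < b \<and> b < c' \<and> c' \<le> n \<and>
      sigma w (Suc m) a' < sigma w (Suc m) c' \<and> sigma w (Suc m) c' < sigma w (Suc m) b"
    apply (rule exI[of _ a], rule exI[of _ q], rule exI[of _ "q+1"])
    unfolding e1 e2 e3 using lt asc a l q_def by simp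
  then show False using av unfolding avoids_132_def by blast
qed

lemma lemB:
  assumes m: "m < length w" and c: "1 \<le> c" "c \<le> n"
    and v: "sigma w m (w!m) < sigma w m c" "sigma w m c < sigma w m (w!m + 1)"
  shows "c < w!m"
proof (rule ccontr)
  define q where "q = w!m"
  have l: "1 \<le> q" "q + 1 \<le> n" using letter m q_def by auto
  assume nt: "\<not> ?thesis"
  have "c \<noteq> q" "c \<noteq> q + 1" using v q_def by auto
  hence qc: "q + 1 < c" using nt q_def by simp
  have av: "avoids_132 n (sigma w m)" using avoid m by simp
  have "\<exists>a b c'. 1 \<le> a \<and> a < b \<and> b < c' \<and> c' \<le> n \<and>
      sigma w m a < sigma w m c' \<and> sigma w m c' < sigma w m b"
    apply (rule exI[of _ q], rule exI[of _ "q+1"], rule exI[of _ c])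
    using v l c q_def qc by simp
  then show False using av unfolding avoids_132_def by blast
qed

lemma main:
  assumes ij: "1 \<le> i" "i < j" "j \<le> n" and m: "m < length w"
    and e: "{sigma w m (w!m), sigma w m (w!m + 1)} = {i, j}"
  shows "w!m = j - i"
proof -
  define q where "q = w!m"
  define \<sigma> where "\<sigma> = sigma w m"
  have l: "1 \<le> q" "q + 1 \<le> n" using letter m q_def by auto
  have asc: "\<sigma> q < \<sigma> (q+1)" using ascent[OF m] q_def \<sigma>_def by simp
  have qi: "\<sigma> q = i" and qj: "\<sigma> (q+1) = j"
    using e asc ij unfolding q_def[symmetric] \<sigma>_def[symmetric] by (auto simp: doubleton_eq_iff)
  have mle: "m \<le> length w" using m by simp
  have C1: "i < \<sigma> a \<and> \<sigma> a < j" if a: "1 \<le> a" "a < q" for a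
  proof
    have "sigma w m (w!m) < sigma w m a" using lemA[OF m] a unfolding q_def by simp
    then show "i < \<sigma> a" using qi unfolding \<sigma>_def q_def by simp
    have ne: "\<sigma> a \<noteq> j"
    proof
      assume eq: "\<sigma> a = j"
      have "a \<in> {1..n}" "q+1 \<in> {1..n}" using a l by auto
      then have "a = q+1" using inj_onD[OF inj[OF mle], of a "q+1"] eq qj unfolding \<sigma>_def by simp
      then show False using a by simp
    qed
    show "\<sigma> a < j"
    proof (rule ccontr)
      assume "\<not> \<sigma> a < j"
      hence xj: "j < \<sigma> a" using ne by simp
      define x where "x = \<sigma> a"
      have xjx: "j < x" using xj x_def by simp
      have xr: "x \<in> {1..n}" using range[OF mle, of a] a l x_def \<sigma>_def by simp
      have bm: "before m x j" unfolding before_def x_def \<sigma>_def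
        using a l qj \<sigma>_def by (intro exI[of _ a] exI[of _ "q+1"]) auto
      define t where "t = (LEAST t. before t x j)"
      have bt: "before t x j" using LeastI[of "\<lambda>t. before t x j", OF bm] t_def by simp
      have tm: "t \<le> m" using Least_le[of "\<lambda>t. before t x j", OF bm] t_def by simp
      have "t \<noteq> 0"
      proof
        assume "t = 0"
        with bt have "before 0 x j" by simp
        hence "x < j" by (simp add: before0)
        then show False using xjx by simp
      qed
      then obtain t0 where t0: "t = Suc t0" using not0_implies_Suc by blast
      have nb: "\<not> before t0 x j" using not_less_Least[of t0 "\<lambda>t. before t x j"] t0 t_def by simp
      have "before t0 j x" using total[of t0 j x] nb xjx xr ij tm t0 m by auto
      hence sw: "sigma w t0 (w!t0) = j \<and> sigma w t0 (w!t0 + 1) = x"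
        using swap_time[of t0 j x] bt t0 tm m by simp
      have t0m: "t0 < length w" using t0 tm m by simp
      obtain c where c: "c \<in> {1..n}" "sigma w t0 c = i" using surj[of t0 i] t0m ij by auto
      have "c \<noteq> w!t0" "c \<noteq> w!t0 + 1" using c sw ij xjx by auto
      moreover have "\<not> c < w!t0"
      proof
        assume "c < w!t0"
        then have "sigma w t0 (w!t0) < sigma w t0 c" using lemA[OF t0m, of c] c(1) by simp
        then show False using sw c ij by simp
      qed
      ultimately have "w!t0 < c" by simp
      hence "before t0 j i" unfolding before_def using sw c letter[OF t0m]
        by (intro exI[of _ "w!t0"] exI[of _ c]) auto
      hence "before m j i" using mono[of t0 m i j] ij tm t0 m by simp
      moreover have "before m i j" unfolding before_def using qi qj l \<sigma>_def
        by (intro exI[of _ q] exI[of _ "q+1"]) auto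
      ultimately show False using excl[OF mle] by blast
    qed
  qed
  have C2: "\<exists>a. 1 \<le> a \<and> a < q \<and> \<sigma> a = y" if y: "i < y" "y < j" for y
  proof -
    obtain c where c: "c \<in> {1..n}" "\<sigma> c = y" using surj[OF mle, of y] y ij \<sigma>_def by auto
    have "c < q" using lemB[OF m, of c] c y qi qj q_def \<sigma>_def by simp
    then show ?thesis using c by auto
  qed
  have img: "\<sigma> ` {1..<q} = {i<..<j}"
  proof
    show "\<sigma> ` {1..<q} \<subseteq> {i<..<j}" using C1 by auto
    show "{i<..<j} \<subseteq> \<sigma> ` {1..<q}"
    proof
      fix y assume "y \<in> {i<..<j}"
      then obtain a where "1 \<le> a" "a < q" "\<sigma> a = y" using C2 by auto
      then show "y \<in> \<sigma> ` {1..<q}" by force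
    qed
  qed
  have "inj_on \<sigma> {1..<q}"
    unfolding \<sigma>_def by (rule inj_on_subset[OF inj[OF mle]]) (use l in auto)
  hence "card {1..<q} = card {i<..<j}" using img card_image by metis
  hence "q - 1 = j - i - 1" by simp
  then show ?thesis using l ij q_def by simp
qed

end

theorem mainTheorem7:
  fixes n i j :: nat and w :: "nat list"
  assumes "avoiding_132_network n w"
    and "1 \<le> i" and "i < j" and "j \<le> n"
    and "1 \<le> k" and "k \<le> length w"
    and "{sigma w (k - 1) (w ! (k - 1)), sigma w (k - 1) (w ! (k - 1) + 1)} = {i, j}"
  shows "w ! (k - 1) = j - i"
proof -
  interpret net n w using assms(1) by unfold_locales
  have "k - 1 < length w" using assms(5,6) by simp
  then show ?thesis using main[of i j "k - 1"] assms(2,3,4,7) by blast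
qed

end
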